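(* Let $\mathcal{G}$ be a g-sequent, $C$ a constraint, and $\mathrm{H}:=\mathrm{H}(\mathbf{G}(C))$. If $\mathrm{H}'$ is a fracturable subset of $\mathrm{H}$ (in $\mathsf{DG}(\mathrm H)$) and $\mathcal{G}$ satisfies $C$, then $\overline{\mathrm{H}'}(\mathcal{G})$ satisfies $C\ominus\mathbf{G}(\mathrm{H}')$.
   Context: Fix a countably infinite set $\mathtt{S}$ of sequents (atomic labels), a set $\mathcal{U}$ of vertices, and a non-empty finite set $\mathtt{E}$ of edge types. A g-sequent is $\mathcal{G}=(\mathcal{V},\mathcal{E},\mathcal{L})$ with $\mathcal{V}\subseteq\mathcal{U}$, $\mathcal{E}=\{\mathcal{E}_a\mid a\in\mathtt{E}\}$, $\mathcal{E}_a\subseteq\mathcal{V}\times\mathcal{V}$, $\mathcal{L}:\mathcal{V}\to\mathtt{S}$; $\mathcal U(\mathcal G)=\mathcal V$; written $\Gamma\vdash\Delta$ with $\Gamma$ the set of edge atoms $w\mathcal{E}_a u$ and $\Delta$ the set of prefixed sequents $w:S$; commas denote disjoint union. Let $\overline{\mathtt E}=\{\bar a\mid a\in\mathtt E\}$, $\bar{\bar z}=z$, $\overline{x_1\cdots x_n}=\bar x_n\cdots\bar x_1$, $\varepsilon$ empty string. Paths: $\mathcal{G}\models u\xrightarrow{a}w$ iff $(u,w)\in\mathcal{E}_a$; $u\xrightarrow{\bar a}w$ iff $(w,u)\in\mathcal{E}_a$; $u\xrightarrow{\varepsilon}w$ iff $u=w$; $u\xrightarrow{xs}w$ iff some $v$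 has $u\xrightarrow{x}v$, $v\xrightarrow{s}w$; $u\xrightarrow{\mathscr L}w$ iff $u\xrightarrow{s}w$ for some $s\in\mathscr L$. An $\mathtt E$-system is a finite set $\mathbf G$ of production rules $x\longrightarrow t$ ($x\in\mathtt E\cup\overline{\mathtt E}$, $t$ a string) such that $x\longrightarrow t\in\mathbf G$ iff $\bar x\longrightarrow\bar t\in\mathbf G$; $\mathbf G(s)=\{t\mid s\longrightarrow^*_{\mathbf G}t\}$ ($\longrightarrow^*_{\mathbf G}$: reflexive-transitive closure of rewriting one occurrence of a left side). For $p=x\longrightarrow t$, $\bar p=\bar x\longrightarrow\bar t$; $(p,\bar p)$ is a production pair; $P(\mathbf G)$ is the set of production pairs in $\mathbf G$. A constraint is a finite tree $C=(V,E,L)$, $V\subseteq\mathcal U$, each edge labelled $L(w,u)=\mathbf G'(a)$ for some $a\in\mathtt E$ and $\mathtt E$-system $\mathbf G'$ (which is said to participate in $C$); $\mathbf G(C)$ is the union of all $\mathtt E$-systems participating in $C$. $\mathcal G$ satisfies $C$ iff $V\subseteq\mathcal U(\mathcal G)$ and $\mathcal G\models w\xrightarrow{\mathbf G'(a)}u$ for every edge with $L(w,u)=\mathbf G'(a)$. Fracture: $C\ominus\mathbf G$ replaces every label $\mathbf G'(a)$ by $(\mathbf G'\setminus\mathbf G)(a)$. Horn rules: for $s=x_1\cdots x_n$, $w\mathcal E_s u$ abbreviates atoms $w\mathcal E_{x_1}v_1,\dots,v_{n-1}\mathcal E_{x_n}u$, with $v\mathcal E_{\bar a}z$ meaning $z\mathcal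 E_a v$ and $w\mathcal E_\varepsilon u$ meaning $w=u$. Forward Horn rule $h_f$: premise $\Gamma,w\mathcal{E}_s u,w\mathcal{E}_a u\vdash\Delta$, conclusion $\Gamma,w\mathcal{E}_s u\vdash\Delta$; backward Horn rule $h_b$: same with $w\mathcal E_a u$ replaced by $u\mathcal E_a w$. $\mathbf{G}(h_f)=\{a\longrightarrow s,\bar a\longrightarrow\bar s\}$, $\mathbf{G}(h_b)=\{\bar a\longrightarrow s,a\longrightarrow\bar s\}$, $\mathbf G(\mathrm H)=\bigcup_{h\in\mathrm H}\mathbf G(h)$, $P(h)=P(\mathbf G(h))$. For a production pair $(p,\bar p)$ with $p=a\longrightarrow s$ (resp. $p=\bar a\longrightarrow s$), $a\in\mathtt E$, $\mathrm H(p,\bar p)$ is the singleton of the corresponding forward (resp. backward) Horn rule; $\mathrm H(\mathbf G)=\bigcup_{(p,\bar p)\in P(\mathbf G)}\mathrm H(p,\bar p)$. Dependency graph: for distinct production pairs with $p=x\longrightarrow s$, $p'=y\longrightarrow t$, $(p,\bar p)\sqsubset(p',\bar p')$ iff $s$ or $\bar s$ contains the letter $y$; $\sqsubseteq$ is the reflexive-transitive closure. For Horn rules, $\mathsf{DG}(\mathrm H)=(\mathrm H,\sqsubseteq')$ with $h\sqsubseteq' h'$ iff the production pair of $h$ is $\sqsubseteq$ the production pair of $h'$. A subset $V'$ of a dependency graph $(V,\sqsubseteq)$ is fracturable iff there are no $v\in V'$, $v'\in V\setminus V'$ with $v\sqsubseteq v'$. Saturation: the inverse $\bar h$ of a Horn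 rule $h$ maps the conclusion of an instance of $h$ to its premise (adds the edge atom). $\overline{\mathrm H'}(\mathcal G)$ is obtained from $\mathcal G$ by repeatedly applying inverses of rules in $\mathrm H'$ as long as this changes the g-sequent. *)

theory Defs
  imports Main "HOL-Library.Countable"
begin

text \<open>Letters of E \<union> E-bar: Fw a is the edge type a, Bw a is its converse a-bar.\<close>
datatype 'e letter = Fw 'e | Bw 'e

fun lbar :: "'e letter \<Rightarrow> 'e letter" where
  "lbar (Fw a) = Bw a"
| "lbar (Bw a) = Fw a"

definition sbar :: "'e letter list \<Rightarrow> 'e letter list" where
  "sbar s = rev (map lbar s)"

type_synonym 'e production = "'e letter \<times> 'e letter list"

definition pbar :: "'e production \<Rightarrow> 'e production" where
  "pbar p = (lbar (fst p), sbar (snd p))"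

definition E_system :: "'e production set \<Rightarrow> bool" where
  "E_system Gs \<longleftrightarrow> finite Gs \<and> (\<forall>p. p \<in> Gs \<longleftrightarrow> pbar p \<in> Gs)"

definition rewrite_step :: "'e production set \<Rightarrow> ('e letter list \<times> 'e letter list) set" where
  "rewrite_step Gs = {(l @ [x] @ r, l @ t @ r) | l x r t. (x, t) \<in> Gs}"

definition lang :: "'e production set \<Rightarrow> 'e letter list \<Rightarrow> 'e letter list set" where
  "lang Gs s = {t. (s, t) \<in> (rewrite_step Gs)\<^sup>*}"

record ('u, 'e, 's) gseq =
  gV :: "'u set"
  gE :: "'e \<Rightarrow> ('u \<times> 'u) set"
  gL :: "'u \<Rightarrow> 's"

definition gseq_wf :: "('u, 'e, 's) gseq \<Rightarrow> bool" where
  "gseq_wf G \<longleftrightarrow> (\<forall>a. gE G a \<subseteq> gV G \<times> gV G)"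

fun lpath :: "('e \<Rightarrow> ('u \<times> 'u) set) \<Rightarrow> 'e letter list \<Rightarrow> 'u \<Rightarrow> 'u \<Rightarrow> bool" where
  "lpath E [] w u \<longleftrightarrow> w = u"
| "lpath E (Fw a # s) w u \<longleftrightarrow> (\<exists>v. (w, v) \<in> E a \<and> lpath E s v u)"
| "lpath E (Bw a # s) w u \<longleftrightarrow> (\<exists>v. (v, w) \<in> E a \<and> lpath E s v u)"

definition lang_path :: "('u, 'e, 's) gseq \<Rightarrow> 'e letter list set \<Rightarrow> 'u \<Rightarrow> 'u \<Rightarrow> bool" where
  "lang_path G L u w \<longleftrightarrow> (\<exists>s\<in>L. lpath (gE G) s u w)"

text \<open>A constraint: vertex set, directed tree edges, and for each edge a label G'(a),
  recorded as the pair (G', a) so that fracture can act on the system G'.\<close>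
record ('u, 'e) constr =
  cV :: "'u set"
  cE :: "('u \<times> 'u) set"
  cL :: "'u \<times> 'u \<Rightarrow> 'e production set \<times> 'e"

definition finite_tree :: "'u set \<Rightarrow> ('u \<times> 'u) set \<Rightarrow> bool" where
  "finite_tree V E \<longleftrightarrow> finite V \<and> V \<noteq> {} \<and> E \<subseteq> V \<times> V
     \<and> (\<forall>x y. (x, y) \<in> E \<longrightarrow> x \<noteq> y \<and> (y, x) \<notin> E)
     \<and> card E + 1 = card V
     \<and> (\<forall>x\<in>V. \<forall>y\<in>V. (x, y) \<in> (E \<union> E\<inverse>)\<^sup>*)"

definition constraint :: "('u, 'e) constr \<Rightarrow> bool" where
  "constraint C \<longleftrightarrow> finite_tree (cV C) (cE C) \<and> (\<forall>e\<in>cE C. E_system (fst (cL C e)))"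

definition sys_of_constr :: "('u, 'e) constr \<Rightarrow> 'e production set" where
  "sys_of_constr C = (\<Union>e\<in>cE C. fst (cL C e))"

definition satisfies :: "('u, 'e, 's) gseq \<Rightarrow> ('u, 'e) constr \<Rightarrow> bool" where
  "satisfies G C \<longleftrightarrow> cV C \<subseteq> gV G \<and>
     (\<forall>(w, u)\<in>cE C. lang_path G (lang (fst (cL C (w, u))) [Fw (snd (cL C (w, u)))]) w u)"

definition fracture :: "('u, 'e) constr \<Rightarrow> 'e production set \<Rightarrow> ('u, 'e) constr" where
  "fracture C Gs = C\<lparr>cL := (\<lambda>e. (fst (cL C e) - Gs, snd (cL C e)))\<rparr>"

text \<open>Horn_f a s: forward rule (adds w E_a u given w E_s u);
      Horn_b a s: backward rule (adds u E_a w given w E_s u).\<close>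
datatype 'e horn = Horn_f 'e "'e letter list" | Horn_b 'e "'e letter list"

fun horn_sys :: "'e horn \<Rightarrow> 'e production set" where
  "horn_sys (Horn_f a s) = {(Fw a, s), (Bw a, sbar s)}"
| "horn_sys (Horn_b a s) = {(Bw a, s), (Fw a, sbar s)}"

definition sys_of_horns :: "'e horn set \<Rightarrow> 'e production set" where
  "sys_of_horns H = (\<Union>h\<in>H. horn_sys h)"

definition prod_pair :: "'e production \<Rightarrow> 'e production set" where
  "prod_pair p = {p, pbar p}"

definition prod_pairs :: "'e production set \<Rightarrow> 'e production set set" where
  "prod_pairs Gs = prod_pair ` Gs"

fun horn_of_prod :: "'e production \<Rightarrow> 'e horn" where
  "horn_of_prod (Fw a, s) = Horn_f a s"
| "horn_of_prod (Bw a, s) = Horn_b a s"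

text \<open>H(G) = union over production pairs (p, p-bar) of H(p, p-bar); every p \<in> G
  arises as first component of the pair (p, p-bar).\<close>
definition horns_of_sys :: "'e production set \<Rightarrow> 'e horn set" where
  "horns_of_sys Gs = horn_of_prod ` Gs"

definition dep_step :: "'e production set \<Rightarrow> 'e production set \<Rightarrow> bool" where
  "dep_step P P' \<longleftrightarrow> P \<noteq> P' \<and>
     (\<exists>p\<in>P. \<exists>p'\<in>P'. fst p' \<in> set (snd p) \<or> fst p' \<in> set (sbar (snd p)))"

definition horn_dep_le :: "'e horn set \<Rightarrow> 'e horn \<Rightarrow> 'e horn \<Rightarrow> bool" where
  "horn_dep_le H h h' \<longleftrightarrow>
     (horn_sys h, horn_sys h') \<in>
       ({(P, P'). P \<in> horn_sys ` H \<and> P' \<in> horn_sys ` H \<and> dep_step P P'})\<^sup>*"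

definition fracturable :: "'e horn set \<Rightarrow> 'e horn set \<Rightarrow> bool" where
  "fracturable H H' \<longleftrightarrow> H' \<subseteq> H \<and>
     \<not> (\<exists>h\<in>H'. \<exists>h'\<in>H - H'. horn_dep_le H h h')"

definition horn_closed :: "'e horn set \<Rightarrow> 'u set \<Rightarrow> ('e \<Rightarrow> ('u \<times> 'u) set) \<Rightarrow> bool" where
  "horn_closed H V E \<longleftrightarrow>
     (\<forall>a s w u. Horn_f a s \<in> H \<longrightarrow> w \<in> V \<longrightarrow> u \<in> V \<longrightarrow> lpath E s w u \<longrightarrow> (w, u) \<in> E a) \<and>
     (\<forall>a s w u. Horn_b a s \<in> H \<longrightarrow> w \<in> V \<longrightarrow> u \<in> V \<longrightarrow> lpath E s w u \<longrightarrow> (u, w) \<in> E a)"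

text \<open>Result of exhaustively applying inverses of rules in H: the least extension of the edges
  closed under them (vertices and labels unchanged).\<close>
definition saturate :: "'e horn set \<Rightarrow> ('u, 'e, 's) gseq \<Rightarrow> ('u, 'e, 's) gseq" where
  "saturate H G = G\<lparr>gE := (\<lambda>a. \<Inter>{E' a | E'. (\<forall>b. gE G b \<subseteq> E' b) \<and> horn_closed H (gV G) E'})\<rparr>"

end

theory Submission
  imports Defs
begin

lemma lbar_lbar[simp]: "lbar (lbar x) = x" by (cases x) auto
lemma sbar_sbar[simp]: "sbar (sbar s) = s" by (simp add: sbar_def rev_map comp_def)
lemma pbar_pbar[simp]: "pbar (pbar p) = p" by (simp add: pbar_def)

lemma lpath_append:
  "lpath E (a @ b) v w \<longleftrightarrow> (\<exists>z. lpath E a v z \<and> lpath E b z w)"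
proof (induction a arbitrary: v)
  case Nil then show ?case by simp
next
  case (Cons x a) then show ?case by (cases x) auto
qed

lemma lpath_sbar: "lpath E (sbar s) v w \<longleftrightarrow> lpath E s w v"
proof (induction s arbitrary: v w)
  case Nil then show ?case by (auto simp: sbar_def)
next
  case (Cons x s)
  have "sbar (x # s) = sbar s @ [lbar x]" by (simp add: sbar_def)
  then show ?case using Cons by (cases x) (auto simp: lpath_append)
qed

lemma lpath_mono: "(\<And>b. E b \<subseteq> E' b) \<Longrightarrow> lpath E s v w \<Longrightarrow> lpath E' s v w"
proof (induction s arbitrary: v)
  case Nil then show ?case by simp
next
  case (Cons x s) then show ?case by (cases x) auto
qed

lemma lpath_in_V: "(\<And>b. E b \<subseteq> V \<times> V) \<Longrightarrow> lpath E s v w \<Longrightarrow> v \<in> V \<Longrightarrow> w \<in> V"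
proof (induction s arbitrary: v)
  case Nil then show ?case by simp
next
  case (Cons x s) then show ?case by (cases x) auto
qed

lemma step_app_right: "(a, a') \<in> rewrite_step R \<Longrightarrow> (a @ b, a' @ b) \<in> rewrite_step R"
  unfolding rewrite_step_def by auto (metis append.assoc append_Cons)

lemma step_app_left: "(a, a') \<in> rewrite_step R \<Longrightarrow> (b @ a, b @ a') \<in> rewrite_step R"
  unfolding rewrite_step_def by auto (metis append.assoc)

lemma steps_app_right: "(a, a') \<in> (rewrite_step R)\<^sup>* \<Longrightarrow> (a @ b, a' @ b) \<in> (rewrite_step R)\<^sup>*"
  by (induction rule: rtrancl_induct) (auto intro: rtrancl_into_rtrancl step_app_right)

lemma steps_app_left: "(a, a') \<in> (rewrite_step R)\<^sup>* \<Longrightarrow> (b @ a, b @ a') \<in> (rewrite_step R)\<^sup>*"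
  by (induction rule: rtrancl_induct) (auto intro: rtrancl_into_rtrancl step_app_left)

lemma step_split:
  assumes "(a @ b, u) \<in> rewrite_step R"
  shows "(\<exists>a'. (a, a') \<in> rewrite_step R \<and> u = a' @ b) \<or> (\<exists>b'. (b, b') \<in> rewrite_step R \<and> u = a @ b')"
proof -
  obtain l x r t where e: "a @ b = l @ [x] @ r" "u = l @ t @ r" "(x, t) \<in> R"
    using assms unfolding rewrite_step_def by blast
  from e(1) obtain us where "(a = l @ us \<and> us @ b = [x] @ r) \<or> (a @ us = l \<and> b = us @ [x] @ r)"
    by (auto simp: append_eq_append_conv2)
  then show ?thesis
  proof
    assume h: "a = l @ us \<and> us @ b = [x] @ r"
    show ?thesis
    proof (cases us)
      case Nil
      then have "b = [] @ [x] @ r" "u = a @ ([] @ t @ r)" using h e by auto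
      then show ?thesis using e(3) unfolding rewrite_step_def by blast
    next
      case (Cons y us')
      then have "a = l @ [x] @ us'" "r = us' @ b" using h by auto
      then have "u = (l @ t @ us') @ b" using e by simp
      then show ?thesis using e(3) \<open>a = l @ [x] @ us'\<close> unfolding rewrite_step_def by blast
    qed
  next
    assume h: "a @ us = l \<and> b = us @ [x] @ r"
    then have "u = a @ (us @ t @ r)" using e by simp
    then show ?thesis using e(3) h unfolding rewrite_step_def by blast
  qed
qed

definition frozen :: "'e production set \<Rightarrow> 'e letter list \<Rightarrow> bool" where
  "frozen R m \<longleftrightarrow> (\<forall>q\<in>R. fst q \<notin> set m)"

lemma frozen_no_step: "frozen R m \<Longrightarrow> (m, m') \<notin> rewrite_step R"
  unfolding frozen_def rewrite_step_def by fastforce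

lemma frozen_steps:
  assumes "(l @ m @ r, u) \<in> (rewrite_step R)\<^sup>*" "frozen R m"
  shows "\<exists>l' r'. u = l' @ m @ r' \<and> (l, l') \<in> (rewrite_step R)\<^sup>* \<and> (r, r') \<in> (rewrite_step R)\<^sup>*"
  using assms(1)
proof (induction rule: rtrancl_induct)
  case base then show ?case by blast
next
  case (step y z)
  then obtain l' r' where y: "y = l' @ m @ r'" "(l, l') \<in> (rewrite_step R)\<^sup>*" "(r, r') \<in> (rewrite_step R)\<^sup>*"
    by blast
  from step(2) y(1) have "(l' @ (m @ r'), z) \<in> rewrite_step R" by simp
  from step_split[OF this] show ?case
  proof
    assume "\<exists>a'. (l', a') \<in> rewrite_step R \<and> z = a' @ m @ r'"
    then show ?thesis using y by (blast intro: rtrancl_into_rtrancl)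
  next
    assume "\<exists>b'. (m @ r', b') \<in> rewrite_step R \<and> z = l' @ b'"
    then obtain b' where b: "(m @ r', b') \<in> rewrite_step R" "z = l' @ b'" by blast
    from step_split[OF b(1)] frozen_no_step[OF assms(2)]
    obtain r'' where "(r', r'') \<in> rewrite_step R" "b' = m @ r''" by blast
    then show ?thesis using y b by (blast intro: rtrancl_into_rtrancl)
  qed
qed

lemma horn_sys_pair: "p \<in> horn_sys h \<Longrightarrow> horn_sys h = {p, pbar p}"
  by (cases h) (auto simp: pbar_def)

lemma horn_sys_of_prod: "horn_sys (horn_of_prod p) = {p, pbar p}"
  by (cases p, rename_tac x s, case_tac x) (auto simp: pbar_def)


lemma core:
  fixes E :: "'e \<Rightarrow> ('u \<times> 'u) set"
  assumes EV: "\<And>b. E b \<subseteq> V \<times> V"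
    and closed: "horn_closed H' V E"
    and frz0: "\<forall>x t'. (x, t') \<in> Gs \<longrightarrow> (x, t') \<in> F \<longrightarrow> frozen (Gs - F) t'"
    and Fdef: "F = sys_of_horns H'"
  shows "(s, t) \<in> (rewrite_step Gs)\<^sup>* \<Longrightarrow> lpath E t v v' \<Longrightarrow> v \<in> V \<Longrightarrow>
     \<exists>s0. (s, s0) \<in> (rewrite_step (Gs - F))\<^sup>* \<and> lpath E s0 v v'"
proof (induction s rule: converse_rtrancl_induct)
  case base then show ?case by blast
next
  case (step s s1)
  then obtain s1' where s1': "(s1, s1') \<in> (rewrite_step (Gs - F))\<^sup>*" "lpath E s1' v v'" by blast
  from step(1) obtain l x r t' where e: "s = l @ [x] @ r" "s1 = l @ t' @ r" "(x, t') \<in> Gs"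
    unfolding rewrite_step_def by blast
  show ?case
  proof (cases "(x, t') \<in> F")
    case False
    then have "(s, s1) \<in> rewrite_step (Gs - F)" using e unfolding rewrite_step_def by blast
    then show ?thesis using s1' by (meson converse_rtrancl_into_rtrancl)
  next
    case True
    from frozen_steps[OF s1'(1)[unfolded e(2)] frz0[rule_format, OF e(3) True]]
    obtain l' r' where d: "s1' = l' @ t' @ r'" "(l, l') \<in> (rewrite_step (Gs - F))\<^sup>*"
      "(r, r') \<in> (rewrite_step (Gs - F))\<^sup>*" by blast
    from s1'(2) d(1) obtain v1 v2 where p: "lpath E l' v v1" "lpath E t' v1 v2" "lpath E r' v2 v'"
      by (auto simp: lpath_append)
    have v1: "v1 \<in> V" using lpath_in_V[OF EV p(1) step(5)] .
    have v2: "v2 \<in> V" using lpath_in_V[OF EV p(2) v1] .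
    from True Fdef obtain h where h: "h \<in> H'" "(x, t') \<in> horn_sys h" by (auto simp: sys_of_horns_def)
    have px: "lpath E [x] v1 v2"
    proof (cases h)
      case (Horn_f a s2)
      with h have "(x = Fw a \<and> t' = s2) \<or> (x = Bw a \<and> t' = sbar s2)" by auto
      then show ?thesis
      proof
        assume "x = Fw a \<and> t' = s2"
        then show ?thesis using closed h(1) Horn_f p(2) v1 v2 unfolding horn_closed_def by auto
      next
        assume "x = Bw a \<and> t' = sbar s2"
        then show ?thesis using closed h(1) Horn_f p(2) v1 v2 unfolding horn_closed_def
          by (auto simp: lpath_sbar)
      qed
    next
      case (Horn_b a s2)
      with h have "(x = Bw a \<and> t' = s2) \<or> (x = Fw a \<and> t' = sbar s2)" by auto
      then show ?thesis
      proof
        assume "x = Bw a \<and> t' = s2"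
        then show ?thesis using closed h(1) Horn_b p(2) v1 v2 unfolding horn_closed_def by auto
      next
        assume "x = Fw a \<and> t' = sbar s2"
        then show ?thesis using closed h(1) Horn_b p(2) v1 v2 unfolding horn_closed_def
          by (auto simp: lpath_sbar)
      qed
    qed
    have "(s, l' @ [x] @ r) \<in> (rewrite_step (Gs - F))\<^sup>*"
      using steps_app_right[OF d(2)] e(1) by (metis append.assoc)
    moreover have "(l' @ [x] @ r, l' @ [x] @ r') \<in> (rewrite_step (Gs - F))\<^sup>*"
      using steps_app_left[OF d(3), of "l' @ [x]"] by simp
    moreover have pA: "lpath E ([x] @ r') v1 v'" unfolding lpath_append using p px by blast
    have "lpath E (l' @ ([x] @ r')) v v'" using p(1) pA lpath_append[of E l' "[x] @ r'"] by blast
    ultimately show ?thesis by (meson rtrancl_trans append.assoc)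
  qed
qed

theorem mainTheorem7:
  fixes G :: "('u, 'e::finite, 's::countable) gseq"
    and C :: "('u, 'e) constr"
    and H' :: "'e horn set"
  assumes "infinite (UNIV :: 's set)"
    and "gseq_wf G"
    and "constraint C"
    and "fracturable (horns_of_sys (sys_of_constr C)) H'"
    and "satisfies G C"
  shows "satisfies (saturate H' G) (fracture C (sys_of_horns H'))"
proof -
  define V where "V = gV G"
  define P where "P = (\<lambda>E'. (\<forall>b. gE G b \<subseteq> E' b) \<and> horn_closed H' V E')"
  define E where "E = (\<lambda>a. \<Inter>{E' a | E'. P E'})"
  have sat: "saturate H' G = G\<lparr>gE := E\<rparr>" unfolding saturate_def E_def P_def V_def by simp
  have sub: "\<And>E' b. P E' \<Longrightarrow> E b \<subseteq> E' b" unfolding E_def by blast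
  have PV: "P (\<lambda>b. V \<times> V)" using assms(2) unfolding P_def V_def gseq_wf_def horn_closed_def
    by auto
  have EV: "\<And>b. E b \<subseteq> V \<times> V" using sub[OF PV] .
  have GE: "\<And>b. gE G b \<subseteq> E b" unfolding E_def P_def by blast
  have closed: "horn_closed H' V E"
    unfolding horn_closed_def
  proof (intro conjI allI impI)
    fix a s w u assume h: "Horn_f a s \<in> H'" "w \<in> V" "u \<in> V" "lpath E s w u"
    show "(w, u) \<in> E a" unfolding E_def
    proof (intro InterI, clarify)
      fix E' assume "P E'"
      then have "lpath E' s w u" using lpath_mono[OF sub[OF \<open>P E'\<close>] h(4)] by blast
      then show "(w, u) \<in> E' a" using \<open>P E'\<close> h unfolding P_def horn_closed_def by blast
    qed
  next
    fix a s w u assume h: "Horn_b a s \<in> H'" "w \<in> V" "u \<in> V" "lpath E s w u"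
    show "(u, w) \<in> E a" unfolding E_def
    proof (intro InterI, clarify)
      fix E' assume "P E'"
      then have "lpath E' s w u" using lpath_mono[OF sub[OF \<open>P E'\<close>] h(4)] by blast
      then show "(u, w) \<in> E' a" using \<open>P E'\<close> h unfolding P_def horn_closed_def by blast
    qed
  qed
  define H where "H = horns_of_sys (sys_of_constr C)"
  define F where "F = sys_of_horns H'"
  have frac: "H' \<subseteq> H" "\<And>h h'. h \<in> H' \<Longrightarrow> h' \<in> H - H' \<Longrightarrow> \<not> horn_dep_le H h h'"
    using assms(4) unfolding fracturable_def H_def by blast+
  have frz: "frozen (Gs - F) t'" if Gs: "Gs \<subseteq> sys_of_constr C" and p: "(x, t') \<in> Gs" "(x, t') \<in> F"
    for Gs x t'
    unfolding frozen_def
  proof (rule ballI, rule notI)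
    fix q assume q: "q \<in> Gs - F" "fst q \<in> set t'"
    from p(2) obtain h where h: "h \<in> H'" "(x, t') \<in> horn_sys h" by (auto simp: F_def sys_of_horns_def)
    define hq where "hq = horn_of_prod q"
    have hqH: "hq \<in> H" using q(1) Gs unfolding hq_def H_def horns_of_sys_def by blast
    have "hq \<notin> H'"
    proof
      assume "hq \<in> H'"
      then have "q \<in> F" unfolding F_def sys_of_horns_def hq_def using horn_sys_of_prod[of q] by blast
      then show False using q(1) by blast
    qed
    then have nd: "\<not> horn_dep_le H h hq" using frac(2)[OF h(1)] hqH by blast
    have hH: "h \<in> H" using frac(1) h(1) by blast
    show False
    proof (cases "horn_sys h = horn_sys hq")
      case True then show False using nd unfolding horn_dep_le_def by simp
    next
      case False
      have "dep_step (horn_sys h) (horn_sys hq)"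
        unfolding dep_step_def using False h(2) q(2) horn_sys_of_prod[of q] unfolding hq_def by force
      then show False using nd hH hqH unfolding horn_dep_le_def by blast
    qed
  qed
  show ?thesis
    unfolding satisfies_def F_def[symmetric]
  proof (intro conjI)
    show "cV (fracture C F) \<subseteq> gV (saturate H' G)"
      using assms(5) by (simp add: satisfies_def fracture_def sat)
  next
    show "\<forall>(w, u)\<in>cE (fracture C F).
       lang_path (saturate H' G) (lang (fst (cL (fracture C F) (w, u))) [Fw (snd (cL (fracture C F) (w, u)))]) w u"
    proof (clarify)
      fix w u assume wu: "(w, u) \<in> cE (fracture C F)"
      then have wuC: "(w, u) \<in> cE C" by (simp add: fracture_def)
      define Gs where "Gs = fst (cL C (w, u))"
      define a where "a = snd (cL C (w, u))"
      have GsC: "Gs \<subseteq> sys_of_constr C" using wuC unfolding Gs_def sys_of_constr_def by blast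
      have wV: "w \<in> V" using assms(3,5) wuC unfolding constraint_def finite_tree_def satisfies_def V_def
        by blast
      from assms(5) wuC obtain t where t: "([Fw a], t) \<in> (rewrite_step Gs)\<^sup>*" "lpath (gE G) t w u"
        unfolding satisfies_def lang_path_def lang_def Gs_def a_def by fastforce
      have "lpath E t w u" using lpath_mono[OF GE t(2)] .
      moreover have frzG: "\<forall>x t'. (x,t') \<in> Gs \<longrightarrow> (x,t') \<in> F \<longrightarrow> frozen (Gs - F) t'"
        using frz[OF GsC] by blast
      ultimately have "\<exists>s0. ([Fw a], s0) \<in> (rewrite_step (Gs - F))\<^sup>* \<and> lpath E s0 w u"
        using core[OF EV closed frzG F_def t(1) _ wV] by simp
      then
      obtain s0 where "([Fw a], s0) \<in> (rewrite_step (Gs - F))\<^sup>*" "lpath E s0 w u" by blast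
      then show "lang_path (saturate H' G) (lang (fst (cL (fracture C F) (w, u))) [Fw (snd (cL (fracture C F) (w, u)))]) w u"
        unfolding lang_path_def lang_def sat by (auto simp: fracture_def Gs_def a_def)
    qed
  qed
qed

end
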